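(* Let $V^{2n}$ be a real vector space with $J\in\mathrm{Aut}(V)$, $J^2=-I$, and a positive definite inner product $(\,,\,)$ for which $J$ is an isometry. Let $\mathbb{L}^p$, $p\geq 2$, be a real vector space with a Lorentzian inner product $\langle\,,\,\rangle$, let $\alpha\colon V^{2n}\times V^{2n}\to\mathbb{L}^p$ be a symmetric bilinear form, and suppose there is a light-like vector $w\in\mathbb{L}^p$ with $\langle\alpha(X,Y),w\rangle=-(X,Y)$ for all $X,Y\in V^{2n}$. Let $\beta\colon V^{2n}\times V^{2n}\to W^{p,p}$ be the associated form (see context), assume $\beta$ is flat and that $\mathcal{S}(\beta)$ is degenerate, and let $v\in U_0^s$ be a light-like vector with $\mathcal{S}(\beta)\cap\mathcal{S}(\beta)^\perp=\mathrm{span}\{v\}\oplus\mathrm{span}\{v\}$. Then $L=\mathrm{span}\{v,w\}\subset\mathbb{L}^p$ is a Lorentzian plane. Moreover, normalizing $v$ so that $\langle v,w\rangle=-1$ and setting $\beta_1=\pi_{L^\perp\times L^\perp}\circ\beta$, we have $$\beta(X,Y)=\beta_1(X,Y)+2\big((X,Y)v,(X,JY)v\big)\quad\text{for all }X,Y\in V^{2n}.$$ Furthermore, if $s\leq n$ then $\dim\mathcal{N}(\beta_1)\geq 2n-2s+2$.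
   Context: $W^{p,p}=\mathbb{L}^p\oplus\mathbb{L}^p$ carries the inner product $\langle\!\langle(\xi,\bar\xi),(\eta,\bar\eta)\rangle\!\rangle=\langle\xi,\eta\rangle-\langle\bar\xi,\bar\eta\rangle$. The associated form is $\beta(X,Y)=(\alpha(X,Y)+\alpha(JX,JY),\ \alpha(X,JY)-\alpha(JX,Y))$. $\beta$ is flat if $\langle\!\langle\beta(X,Y),\beta(Z,T)\rangle\!\rangle-\langle\!\langle\beta(X,T),\beta(Z,Y)\rangle\!\rangle=0$ for all $X,Y,Z,T$. $\mathcal{S}(\beta)=\mathrm{span}\{\beta(X,Y):X,Y\in V\}$; a subspace $S$ of $W^{p,p}$ is degenerate if $S\cap S^\perp\neq 0$ ($\perp$ w.r.t. $\langle\!\langle\,,\,\rangle\!\rangle$). $U_0^s=\pi_1(\mathcal{S}(\beta))\subset\mathbb{L}^p$ is the projection of $\mathcal{S}(\beta)$ onto the first factor and $s=\dim U_0^s$ (it is known that $\mathcal S(\beta)=U_0^s\oplus U_0^s$ and that, when $\mathcal S(\beta)$ is degenerate, a light-like $v$ as in the claim exists). $\pi_{L^\perp\times L^\perp}$ is the orthogonal projection of $W^{p,p}$ onto $L^\perp\oplus L^\perp$ (componentwise orthogonal projection onto $L^\perp\subset\mathbb{L}^p$). For a bilinear form $\theta$, $\mathcal{N}(\theta)=\{Y:\theta(X,Y)=0\ \forall X\}$ is its right kernel. *)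

theory Defs
  imports "HOL-Analysis.Analysis"
begin

text \<open>A (possibly indefinite) symmetric form g restricted to a set L is Lorentzian:
  symmetric, nondegenerate on L, and there is a time-like e in L whose g-orthogonal
  complement in L is space-like (i.e. the index of g on L is exactly 1).\<close>
definition lorentzian_on :: "('l::real_vector \<Rightarrow> 'l \<Rightarrow> real) \<Rightarrow> 'l set \<Rightarrow> bool" where
  "lorentzian_on g L \<longleftrightarrow>
     (\<forall>x\<in>L. \<forall>y\<in>L. g x y = g y x) \<and>
     (\<forall>x\<in>L. (\<forall>y\<in>L. g x y = 0) \<longrightarrow> x = 0) \<and>
     (\<exists>e\<in>L. g e e < 0 \<and> (\<forall>x\<in>L. g x e = 0 \<longrightarrow> g x x \<ge> 0))"

definition lorentzian :: "('l::real_vector \<Rightarrow> 'l \<Rightarrow> real) \<Rightarrow> bool" where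
  "lorentzian g \<longleftrightarrow> bilinear g \<and> lorentzian_on g UNIV"

definition lorentzian_plane :: "('l::real_vector \<Rightarrow> 'l \<Rightarrow> real) \<Rightarrow> 'l set \<Rightarrow> bool" where
  "lorentzian_plane g L \<longleftrightarrow> subspace L \<and> dim L = 2 \<and> lorentzian_on g L"

definition wform :: "('l \<Rightarrow> 'l \<Rightarrow> real) \<Rightarrow> 'l \<times> 'l \<Rightarrow> 'l \<times> 'l \<Rightarrow> real" where
  "wform g a b = g (fst a) (fst b) - g (snd a) (snd b)"

definition assoc_form :: "('v \<Rightarrow> 'v) \<Rightarrow> ('v \<Rightarrow> 'v \<Rightarrow> 'l::real_vector) \<Rightarrow> 'v \<Rightarrow> 'v \<Rightarrow> 'l \<times> 'l" where
  "assoc_form J \<alpha> X Y = (\<alpha> X Y + \<alpha> (J X) (J Y), \<alpha> X (J Y) - \<alpha> (J X) Y)"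

definition flat_form :: "('w \<Rightarrow> 'w \<Rightarrow> real) \<Rightarrow> ('v \<Rightarrow> 'v \<Rightarrow> 'w) \<Rightarrow> bool" where
  "flat_form G \<beta> \<longleftrightarrow>
     (\<forall>X Y Z T. G (\<beta> X Y) (\<beta> Z T) - G (\<beta> X T) (\<beta> Z Y) = 0)"

definition form_span :: "('v \<Rightarrow> 'v \<Rightarrow> 'w::real_vector) \<Rightarrow> 'w set" where
  "form_span \<beta> = span {\<beta> X Y | X Y. True}"

definition gperp :: "('w \<Rightarrow> 'w \<Rightarrow> real) \<Rightarrow> 'w set \<Rightarrow> 'w set" where
  "gperp G S = {u. \<forall>x\<in>S. G u x = 0}"

definition degenerate_subspace :: "('w::real_vector \<Rightarrow> 'w \<Rightarrow> real) \<Rightarrow> 'w set \<Rightarrow> bool" where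
  "degenerate_subspace G S \<longleftrightarrow> S \<inter> gperp G S \<noteq> {0}"

definition gproj :: "('l::real_vector \<Rightarrow> 'l \<Rightarrow> real) \<Rightarrow> 'l set \<Rightarrow> 'l \<Rightarrow> 'l" where
  "gproj g U x = (THE y. y \<in> U \<and> (\<forall>u\<in>U. g (x - y) u = 0))"

definition right_kernel :: "('v \<Rightarrow> 'v \<Rightarrow> 'w::zero) \<Rightarrow> 'v set" where
  "right_kernel \<theta> = {Y. \<forall>X. \<theta> X Y = 0}"

end

theory Submission
  imports Defs
begin



lemma indep_preimage:
  assumes lin: "linear f" and ind: "independent (f ` B)" and inj: "inj_on f B"
  shows "independent B"
proof
  assume "dependent B"
  then obtain b where b: "b \<in> B" "b \<in> span (B - {b})" by (auto simp: dependent_def)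
  then have "f b \<in> f ` span (B - {b})" by blast
  also have "\<dots> = span (f ` (B - {b}))" by (simp add: span_linear_image[OF lin])
  also have "f ` (B - {b}) = f ` B - {f b}" using inj b(1) by (auto simp: inj_on_def)
  finally have "dependent (f ` B)" using b(1) by (auto simp: dependent_def)
  then show False using ind by simp
qed

lemma linear_scaleR_const:
  assumes "linear (l :: 'a::real_vector \<Rightarrow> real)" shows "linear (\<lambda>x. l x *\<^sub>R c)"
  using linear_compose[OF assms linear_scale_left[of c]] by (simp add: o_def)

lemma regular_elem:
  fixes F :: "'a::euclidean_space \<Rightarrow> 'b::euclidean_space \<Rightarrow> 'c::euclidean_space"
  assumes bil: "bilinear F"
    and maxr: "\<forall>X. dim (range (F X)) \<le> dim (range (F X0))"
    and Y0: "F X0 Y = 0"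
  shows "F Z Y \<in> range (F X0)"
proof (rule ccontr)
  assume nin: "F Z Y \<notin> range (F X0)"
  define c where "c = F Z Y"
  define Q where "Q = range (F X0)"
  define F0 where "F0 = F X0"
  define G where "G = F Z"
  have linF0: "linear F0" and linG: "linear G"
    using bil by (auto simp: bilinear_def F0_def G_def)
  have Q: "subspace Q" unfolding Q_def F0_def[symmetric]
    by (rule linear_subspace_image[OF linF0 subspace_UNIV])
  have cQ: "c \<notin> Q" using nin by (simp add: c_def Q_def)
  have "c \<noteq> 0" using cQ subspace_0[OF Q] by auto
  then have Yn0: "Y \<noteq> 0" using linear_0[OF linG] by (auto simp: c_def G_def)
  obtain C where C: "C \<subseteq> Q" "independent C" "Q \<subseteq> span C" "card C = dim Q"
    by (rule basis_exists)
  have finC: "finite C" using C(2) independent_bound_general by blast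
  define pre where "pre u = (SOME x. F0 x = u)" for u
  have pre: "F0 (pre u) = u" if "u \<in> C" for u
  proof -
    have "\<exists>x. F0 x = u" using that C(1) by (auto simp: Q_def F0_def)
    then show ?thesis unfolding pre_def by (rule someI_ex)
  qed
  define B where "B = pre ` C"
  have FB: "F0 ` B = C" unfolding B_def using pre by (force simp: image_image)
  have injpre: "inj_on pre C" by (metis inj_onI pre)
  have injB: "inj_on F0 B" unfolding B_def inj_on_def using pre by auto
  have injspanB: "inj_on F0 (span B)"
    by (rule linear_inj_on_span_independent_image[OF linF0]) (use FB C(2) injB in auto)
  have indB: "independent B" by (rule indep_preimage[OF linF0]) (use FB C(2) injB in auto)
  have cardB: "card B = card C" unfolding B_def by (rule card_image[OF injpre])
  have finB: "finite B" unfolding B_def using finC by simp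
  have YnB: "Y \<notin> span B"
  proof
    assume "Y \<in> span B"
    moreover have "0 \<in> span B" by (rule span_zero)
    moreover have "F0 Y = F0 0" using Y0 linear_0[OF linF0] by (simp add: F0_def)
    ultimately have "Y = 0" using injspanB by (auto simp: inj_on_def)
    then show False using Yn0 by simp
  qed
  then have YnB': "Y \<notin> B" using span_superset by blast
  have indS: "independent (insert Y B)" by (rule independent_insertI[OF YnB indB])
  obtain l where l: "linear l" "\<forall>x\<in>insert Y B. l x = (if x = Y then (1::real) else 0)"
    using linear_independent_extend[OF indS, of "\<lambda>x. if x = Y then (1::real) else 0"] by blast
  have lY: "l Y = 1" using l by simp
  have lB: "l x = 0" if "x \<in> span B" for x
    by (rule linear_eq_0_on_span[OF l(1) _ that]) (use l YnB' in auto)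
  define Lam where "Lam x = F0 x + l x *\<^sub>R c" for x
  have linLam: "linear Lam" unfolding Lam_def
    by (intro linear_compose_add linF0 linear_scaleR_const l(1))
  define S where "S = span (insert Y B)"
  have Lam0: "\<forall>x\<in>S. Lam x = 0 \<longrightarrow> x = 0"
  proof (intro ballI impI)
    fix x assume xS: "x \<in> S" and Lx: "Lam x = 0"
    then obtain k where k: "x - k *\<^sub>R Y \<in> span B" by (auto simp: S_def span_insert)
    define b where "b = x - k *\<^sub>R Y"
    have xb: "x = b + k *\<^sub>R Y" by (simp add: b_def)
    have lx: "l x = k" using lB[OF k] l(1) lY by (simp add: xb b_def[symmetric] linear_add linear_scale)
    have F0x: "F0 x = F0 b" using Y0 linF0 by (simp add: xb linear_add linear_scale F0_def)
    have eq: "k *\<^sub>R c = - F0 b" using Lx by (simp add: Lam_def lx F0x eq_neg_iff_add_eq_0 add.commute)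
    have k0: "k = 0"
    proof (rule ccontr)
      assume "k \<noteq> 0"
      then have "c = inverse k *\<^sub>R (k *\<^sub>R c)" by simp
      then have "c = inverse k *\<^sub>R (- F0 b)" using eq by simp
      moreover have "F0 b \<in> Q" by (simp add: Q_def F0_def)
      ultimately have "c \<in> Q" using Q by (simp add: subspace_scale subspace_neg)
      then show False using cQ by simp
    qed
    then have "F0 b = F0 0" using eq linear_0[OF linF0] by simp
    moreover have "b \<in> span B" using k by (simp add: b_def)
    ultimately have "b = 0" using injspanB span_zero[of B] by (meson inj_onD)
    then show "x = 0" using xb k0 by simp
  qed
  obtain m where m: "m > 0" "\<forall>x\<in>S. norm (Lam x) \<ge> m * norm x"
    using injective_imp_isometric[of S Lam] Lam0 linLam
    by (auto simp: S_def closed_subspace linear_conv_bounded_linear)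
  define G' where "G' x = G (x - l x *\<^sub>R Y)" for x
  have linG': "linear G'" unfolding G'_def
    by (intro linear_compose[of "\<lambda>x. x - l x *\<^sub>R Y" G, unfolded o_def] linG
        linear_compose_sub linear_id[unfolded id_def] linear_scaleR_const l(1))
  obtain M where M: "M > 0" "\<And>x. norm (G' x) \<le> M * norm x"
    using linear_bounded_pos[OF linG'] by blast
  define t where "t = m / (2 * M)"
  have t: "t > 0" using m M by (simp add: t_def)
  define H where "H x = Lam x + t *\<^sub>R G' x" for x
  have linH: "linear H" unfolding H_def
    by (intro linear_compose_add linLam linear_compose_scale_right linG')
  have Hinj: "inj_on H S"
    unfolding linear_injective_on_subspace_0[OF linH subspace_span[of "insert Y B", folded S_def]]
  proof (intro ballI impI)
    fix x assume xS: "x \<in> S" and Hx: "H x = 0"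
    have "Lam x = - (t *\<^sub>R G' x)" using Hx by (simp add: H_def eq_neg_iff_add_eq_0)
    then have "norm (Lam x) = t * norm (G' x)" using t by simp
    also have "\<dots> \<le> t * (M * norm x)" using M(2)[of x] t by (simp add: mult_left_mono)
    also have "\<dots> = (m/2) * norm x" using M by (simp add: t_def)
    finally have "m * norm x \<le> (m/2) * norm x" using m(2) xS by (meson order_trans)
    then have "(m/2) * norm x \<le> 0" by linarith
    then have "norm x \<le> 0" using m(1) by (simp add: mult_le_0_iff)
    then show "x = 0" by simp
  qed
  have dimHS: "dim (H ` insert Y B) = dim (insert Y B)"
    by (rule dim_image_eq[OF linH]) (use Hinj in \<open>simp add: S_def\<close>)
  have "dim (insert Y B) = card B + 1"
    using dim_eq_card_independent[OF indS] finB YnB' by simp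
  have HF: "H ` insert Y B \<subseteq> range (F (X0 + t *\<^sub>R Z))"
  proof
    fix u assume "u \<in> H ` insert Y B"
    then obtain x where u: "u = H x" by blast
    define w' where "w' = x + (l x / t - l x) *\<^sub>R Y"
    have e1: "F (X0 + t *\<^sub>R Z) w' = F0 w' + t *\<^sub>R G w'"
      by (simp add: bilinear_ladd[OF bil] bilinear_lmul[OF bil] F0_def G_def)
    have Y0': "F0 Y = 0" using Y0 by (simp add: F0_def)
    have e2: "F0 w' = F0 x" using Y0' by (simp add: w'_def linear_add[OF linF0] linear_scale[OF linF0])
    have e3: "G w' = G x + (l x / t - l x) *\<^sub>R c"
      unfolding c_def G_def[symmetric] by (simp add: w'_def linear_add[OF linG] linear_scale[OF linG])
    have e4: "G' x = G x - l x *\<^sub>R c"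
      unfolding c_def G_def[symmetric] by (simp add: G'_def linear_diff[OF linG] linear_scale[OF linG])
    have "F (X0 + t *\<^sub>R Z) w' = H x"
      using t by (simp add: e1 e2 e3 e4 H_def Lam_def algebra_simps)
    then show "u \<in> range (F (X0 + t *\<^sub>R Z))" using u by (metis rangeI)
  qed
  have "card B + 1 \<le> dim (range (F (X0 + t *\<^sub>R Z)))"
    using dim_subset[OF HF] dimHS \<open>dim (insert Y B) = card B + 1\<close> by simp
  also have "\<dots> \<le> dim Q" using maxr by (simp add: Q_def)
  finally show False using cardB C(4) by simp
qed



lemma g_quad:
  assumes bil: "bilinear g" and sym: "\<And>x y. g x y = g y x"
  shows "g (a *\<^sub>R x + b *\<^sub>R y) (a *\<^sub>R x + b *\<^sub>R y) = a\<^sup>2 * g x x + 2*a*b * g x y + b\<^sup>2 * g y y"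
  using sym[of y x]
  by (simp add: bilinear_ladd[OF bil] bilinear_radd[OF bil] bilinear_lmul[OF bil] bilinear_rmul[OF bil]
      power2_eq_square algebra_simps)

lemma key_null:
  fixes g :: "'l::euclidean_space \<Rightarrow> 'l \<Rightarrow> real"
  assumes bil: "bilinear g" and sym: "\<And>x y. g x y = g y x"
    and nd: "\<And>x. (\<forall>y. g x y = 0) \<Longrightarrow> x = 0"
    and e: "g e e < 0" "\<And>x. g x e = 0 \<Longrightarrow> g x x \<ge> 0"
    and x: "g x e = 0" "g x x = 0"
  shows "x = 0"
proof -
  have perp: "g x y = 0" if y: "g y e = 0" for y
  proof (rule ccontr)
    assume nz: "g x y \<noteq> 0"
    have yy: "g y y \<ge> 0" using e(2) y by simp
    define t where "t = - g x y / (g y y + 1)"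
    have "g (1 *\<^sub>R x + t *\<^sub>R y) e = 0"
      using x y by (simp add: bilinear_ladd[OF bil] bilinear_lmul[OF bil])
    then have "0 \<le> g (1 *\<^sub>R x + t *\<^sub>R y) (1 *\<^sub>R x + t *\<^sub>R y)" using e(2) by blast
    also have "\<dots> = 2 * t * g x y + t\<^sup>2 * g y y" using g_quad[OF bil sym, of 1 x t y] x by simp
    also have "\<dots> = t * g x y - t\<^sup>2"
    proof -
      have tq: "t * g y y = - g x y - t" using yy unfolding t_def by (simp add: field_simps)
      have "t\<^sup>2 * g y y = t * (- g x y - t)" by (simp add: power2_eq_square tq[symmetric])
      then show ?thesis by (simp add: algebra_simps power2_eq_square)
    qed
    also have "\<dots> < 0"
    proof -
      have "t * g x y = - (g x y)\<^sup>2 / (g y y + 1)" unfolding t_def by (simp add: power2_eq_square)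
      also have "\<dots> < 0" using yy nz by (simp add: divide_pos_pos)
      finally show ?thesis by (smt (verit) zero_le_power2)
    qed
    finally show False by simp
  qed
  have "\<forall>z. g x z = 0"
  proof
    fix z
    define k where "k = g z e / g e e"
    have "g (z - k *\<^sub>R e) e = 0" using e(1)
      by (simp add: bilinear_lsub[OF bil] bilinear_lmul[OF bil] k_def)
    then have "g x (z - k *\<^sub>R e) = 0" by (rule perp)
    moreover have "g x (k *\<^sub>R e) = 0" using x by (simp add: bilinear_rmul[OF bil])
    ultimately show "g x z = 0" by (simp add: bilinear_rsub[OF bil])
  qed
  then show ?thesis by (rule nd)
qed

lemma timelike_perp:
  fixes g :: "'l::euclidean_space \<Rightarrow> 'l \<Rightarrow> real"
  assumes bil: "bilinear g" and sym: "\<And>x y. g x y = g y x"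
    and nd: "\<And>x. (\<forall>y. g x y = 0) \<Longrightarrow> x = 0"
    and e: "g e e < 0" "\<And>x. g x e = 0 \<Longrightarrow> g x x \<ge> 0"
    and e': "g e' e' < 0" and u: "g u e' = 0"
  shows "0 \<le> g u u \<and> (g u u = 0 \<longrightarrow> u = 0)"
proof -
  define a where "a = g e' e"
  define b where "b = g u e"
  define x where "x = a *\<^sub>R u + (- b) *\<^sub>R e'"
  have "g x e = 0" by (simp add: x_def a_def b_def bilinear_ladd[OF bil] bilinear_lsub[OF bil] bilinear_lmul[OF bil])
  then have xx: "g x x \<ge> 0" using e(2) by blast
  have xx2: "g x x = a\<^sup>2 * g u u + b\<^sup>2 * g e' e'"
    unfolding x_def using g_quad[OF bil sym, of a u "-b" e'] u by simp
  have bb: "b\<^sup>2 * g e' e' \<le> 0" using e' by (simp add: mult_nonneg_nonpos)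
  have gu: "0 \<le> g u u"
  proof (rule ccontr)
    assume neg: "\<not> 0 \<le> g u u"
    have "a\<^sup>2 * g u u \<le> 0" using neg by (simp add: mult_nonneg_nonpos)
    then have "a\<^sup>2 * g u u = 0" using xx xx2 bb by linarith
    then have "a = 0" using neg by simp
    then have "g e' e' \<ge> 0" using e(2) by (simp add: a_def)
    then show False using e' by simp
  qed
  moreover have "g u u = 0 \<longrightarrow> u = 0"
  proof
    assume uu: "g u u = 0"
    then have "b\<^sup>2 * g e' e' = 0" using xx xx2 bb by simp
    then have "b = 0" using e' by simp
    then show "u = 0" using key_null[OF bil sym nd e] uu by (simp add: b_def)
  qed
  ultimately show ?thesis by blast
qed

lemma rank_nullity_ge:
  fixes f :: "'a::euclidean_space \<Rightarrow> 'b::euclidean_space"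
  assumes lin: "linear f"
  shows "DIM('a) \<le> dim {x. f x = 0} + dim (range f)"
proof -
  define K where "K = {x. f x = 0}"
  obtain Bk where Bk: "Bk \<subseteq> K" "independent Bk" "K \<subseteq> span Bk" "card Bk = dim K"
    by (rule basis_exists)
  obtain C where C0: "Bk \<subseteq> C" "C \<subseteq> UNIV" "independent C" "UNIV \<subseteq> span C"
    by (rule maximal_independent_subset_extend[OF subset_UNIV Bk(2)])
  note C = C0(1) C0(3) C0(4)
  have finC: "finite C" using C(2) independent_bound_general by blast
  have spanC: "span C = UNIV" using C(3) by auto
  have cardC: "card C = DIM('a)"
    using dim_eq_card_independent[OF C(2)] dim_span[of C] spanC by simp
  define D where "D = C - Bk"
  have indD: "independent D" by (rule independent_mono[OF C(2)]) (auto simp: D_def)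
  have finD: "finite D" using finC by (simp add: D_def)
  have finBk: "finite Bk" using finC C(1) by (rule finite_subset[rotated])
  have cardD: "card D = card C - card Bk" unfolding D_def by (rule card_Diff_subset[OF finBk C(1)])
  have BkC: "card Bk \<le> card C" by (rule card_mono[OF finC C(1)])
  define Ssum where "Ssum = {a + b |a b. a \<in> span D \<and> b \<in> span Bk}"
  have subSsum: "subspace Ssum" unfolding Ssum_def by (intro subspace_sums subspace_span)
  have "C \<subseteq> Ssum"
  proof
    fix c assume c: "c \<in> C"
    show "c \<in> Ssum"
    proof (cases "c \<in> Bk")
      case True
      then have "c = 0 + c \<and> 0 \<in> span D \<and> c \<in> span Bk" by (simp add: span_zero span_base)
      then show ?thesis unfolding Ssum_def by blast
    next
      case False
      then have "c = c + 0 \<and> c \<in> span D \<and> 0 \<in> span Bk" using c by (simp add: span_zero span_base D_def)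
      then show ?thesis unfolding Ssum_def by blast
    qed
  qed
  then have "span C \<subseteq> Ssum" using subSsum by (rule span_minimal)
  then have SsumU: "Ssum = UNIV" using spanC by auto
  have "dim Ssum + dim (span D \<inter> span Bk) = dim (span D) + dim (span Bk)"
    unfolding Ssum_def by (rule dim_sums_Int[OF subspace_span subspace_span])
  also have "\<dots> = card D + card Bk"
    using dim_eq_card_independent[OF indD] dim_eq_card_independent[OF Bk(2)] by simp
  also have "\<dots> = card C" using cardD BkC by linarith
  finally have "dim (span D \<inter> span Bk) = 0" using SsumU cardC by simp
  then have Int0: "span D \<inter> span Bk \<subseteq> {0}" by (simp add: dim_eq_0)
  have inj: "inj_on f (span D)"
    unfolding linear_injective_on_subspace_0[OF lin subspace_span]
  proof (intro ballI impI)
    fix x assume "x \<in> span D" "f x = 0"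
    then have "x \<in> span D \<inter> span Bk" using Bk(3) by (auto simp: K_def)
    then show "x = 0" using Int0 by auto
  qed
  have "dim (f ` D) = dim D" by (rule dim_image_eq[OF lin inj])
  then have "card D \<le> dim (range f)"
    using dim_eq_card_independent[OF indD] dim_subset[of "f ` D" "range f"] by auto
  then show ?thesis using cardD cardC Bk(4) BkC unfolding K_def by linarith
qed


lemma span2_iff: "x \<in> span {v, w} \<longleftrightarrow> (\<exists>a b. x = a *\<^sub>R v + b *\<^sub>R w)"
proof
  assume "x \<in> span {v, w}"
  then obtain a where "x - a *\<^sub>R v \<in> span {w}" by (auto simp: span_breakdown_eq)
  then obtain b where "x - a *\<^sub>R v = b *\<^sub>R w" by (auto simp: span_singleton)
  then show "\<exists>a b. x = a *\<^sub>R v + b *\<^sub>R w" by (metis diff_add_cancel add.commute)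
next
  assume "\<exists>a b. x = a *\<^sub>R v + b *\<^sub>R w"
  then obtain a b where x: "x = a *\<^sub>R v + b *\<^sub>R w" by blast
  have "v \<in> span {v, w}" "w \<in> span {v, w}" by (simp_all add: span_base)
  then show "x \<in> span {v, w}" unfolding x by (intro span_add span_scale)
qed

lemma self_neg: fixes x :: "'a::real_vector" assumes "x = - x" shows "x = 0"
proof -
  have "(2::real) *\<^sub>R x = x + x" by (rule scaleR_2)
  also have "\<dots> = x + - x" by (rule arg_cong[OF assms, of "\<lambda>y. x + y"])
  also have "\<dots> = 0" by simp
  finally show ?thesis by simp
qed


theorem proposition5:
  fixes J :: "'v::euclidean_space \<Rightarrow> 'v"
    and g :: "'l::euclidean_space \<Rightarrow> 'l \<Rightarrow> real"
    and \<alpha> :: "'v \<Rightarrow> 'v \<Rightarrow> 'l"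
    and v w :: 'l and n p :: nat
  assumes dimV: "DIM('v) = 2 * n"
    and J_lin: "linear J" and J_sq: "\<forall>X. J (J X) = - X"
    and J_isom: "\<forall>X Y. inner (J X) (J Y) = inner X Y"
    and dimL: "DIM('l) = p" and p2: "p \<ge> 2"
    and g_lor: "lorentzian g"
    and \<alpha>_bil: "bilinear \<alpha>" and \<alpha>_sym: "\<forall>X Y. \<alpha> X Y = \<alpha> Y X"
    and w_light: "g w w = 0" "w \<noteq> 0"
    and w_prop: "\<forall>X Y. g (\<alpha> X Y) w = - inner X Y"
    and flat: "flat_form (wform g) (assoc_form J \<alpha>)"
    and degen: "degenerate_subspace (wform g) (form_span (assoc_form J \<alpha>))"
    and v_in: "v \<in> fst ` form_span (assoc_form J \<alpha>)"
    and v_light: "g v v = 0" "v \<noteq> 0"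
    and v_null: "form_span (assoc_form J \<alpha>) \<inter> gperp (wform g) (form_span (assoc_form J \<alpha>))
                   = {(a *\<^sub>R v, b *\<^sub>R v) | a b. True}"
  shows "lorentzian_plane g (span {v, w}) \<and>
    (let v' = (- 1 / g v w) *\<^sub>R v;
         L = span {v', w};
         \<beta> = assoc_form J \<alpha>;
         \<beta>\<^sub>1 = (\<lambda>X Y. (gproj g (gperp g L) (fst (\<beta> X Y)), gproj g (gperp g L) (snd (\<beta> X Y))));
         s = dim (fst ` form_span \<beta>)
     in g v' w = - 1 \<and>
        (\<forall>X Y. \<beta> X Y = \<beta>\<^sub>1 X Y + ((2 * inner X Y) *\<^sub>R v', (2 * inner X (J Y)) *\<^sub>R v')) \<and>
        (s \<le> n \<longrightarrow> dim (right_kernel \<beta>\<^sub>1) \<ge> 2 * n - 2 * s + 2))"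
proof -
  have gbil: "bilinear g" and gsym: "\<And>x y. g x y = g y x" and gnd: "\<And>x. (\<forall>y. g x y = 0) \<Longrightarrow> x = 0"
    using g_lor unfolding lorentzian_def lorentzian_on_def by auto
  obtain e where e: "g e e < 0" "\<And>x. g x e = 0 \<Longrightarrow> g x x \<ge> 0"
    using g_lor unfolding lorentzian_def lorentzian_on_def by auto
  note gl = bilinear_ladd[OF gbil] bilinear_radd[OF gbil] bilinear_lmul[OF gbil] bilinear_rmul[OF gbil]
    bilinear_lsub[OF gbil] bilinear_rsub[OF gbil] bilinear_lzero[OF gbil] bilinear_rzero[OF gbil]
    bilinear_lneg[OF gbil] bilinear_rneg[OF gbil]
  note al = bilinear_ladd[OF \<alpha>_bil] bilinear_radd[OF \<alpha>_bil] bilinear_lmul[OF \<alpha>_bil] bilinear_rmul[OF \<alpha>_bil]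
    bilinear_lsub[OF \<alpha>_bil] bilinear_rsub[OF \<alpha>_bil] bilinear_lzero[OF \<alpha>_bil] bilinear_rzero[OF \<alpha>_bil]
    bilinear_lneg[OF \<alpha>_bil] bilinear_rneg[OF \<alpha>_bil]
  note Jl = linear_add[OF J_lin] linear_scale[OF J_lin] linear_diff[OF J_lin] linear_neg[OF J_lin] linear_0[OF J_lin]
  define \<beta> where "\<beta> = assoc_form J \<alpha>"
  define Sb where "Sb = form_span \<beta>"
  have \<beta>S: "\<beta> X Y \<in> Sb" for X Y unfolding Sb_def form_span_def by (rule span_base) blast
  have vperp1: "(v, 0) \<in> gperp (wform g) Sb" and vperp2: "(0, v) \<in> gperp (wform g) Sb"
  proof -
    have "(1 *\<^sub>R v, 0 *\<^sub>R v) \<in> {(a *\<^sub>R v, b *\<^sub>R v) | a b. True}" "(0 *\<^sub>R v, 1 *\<^sub>R v) \<in> {(a *\<^sub>R v, b *\<^sub>R v) | a b. True}" by blast+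
    then show "(v, 0) \<in> gperp (wform g) Sb" "(0, v) \<in> gperp (wform g) Sb"
      using v_null unfolding Sb_def \<beta>_def by auto
  qed
  have gv1: "g v (fst (\<beta> X Y)) = 0" for X Y
    using vperp1 \<beta>S[of X Y] by (auto simp: gperp_def wform_def gl)
  have gv2: "g v (snd (\<beta> X Y)) = 0" for X Y
    using vperp2 \<beta>S[of X Y] by (auto simp: gperp_def wform_def gl)
  have Jinner: "inner (J X) Y = - inner X (J Y)" for X Y
    using J_isom[rule_format, of "J X" Y] J_sq by simp
  have fst\<beta>: "fst (\<beta> X Y) = \<alpha> X Y + \<alpha> (J X) (J Y)" for X Y by (simp add: \<beta>_def assoc_form_def)
  have snd\<beta>: "snd (\<beta> X Y) = \<alpha> X (J Y) - \<alpha> (J X) Y" for X Y by (simp add: \<beta>_def assoc_form_def)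
  have gw1: "g (fst (\<beta> X Y)) w = -2 * inner X Y" for X Y
    using w_prop J_isom by (simp add: fst\<beta> gl)
  have gw2: "g (snd (\<beta> X Y)) w = -2 * inner X (J Y)" for X Y
    using w_prop Jinner[of X Y] by (simp add: snd\<beta> gl)
  obtain X1 :: 'v where X1: "inner X1 X1 = 1"
    using nonempty_Basis by (metis all_not_in_conv inner_Basis)
  have c_ne: "g v w \<noteq> 0"
  proof
    assume vw: "g v w = 0"
    define a where "a = g v e"
    define b where "b = g w e"
    have "g (b *\<^sub>R v + (- a) *\<^sub>R w) e = 0" by (simp add: gl a_def b_def)
    moreover have "g (b *\<^sub>R v + (- a) *\<^sub>R w) (b *\<^sub>R v + (- a) *\<^sub>R w) = 0"
      using g_quad[OF gbil gsym, of b v "-a" w] vw v_light w_light by simp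
    ultimately have x0: "b *\<^sub>R v + (- a) *\<^sub>R w = 0" using key_null[OF gbil gsym gnd e] by blast
    have bn: "b \<noteq> 0"
    proof
      assume "b = 0"
      then have "w = 0" using key_null[OF gbil gsym gnd e] w_light by (simp add: b_def)
      then show False using w_light by simp
    qed
    have vv: "v = (a / b) *\<^sub>R w" using x0 bn
      by (simp add: algebra_simps eq_neg_iff_add_eq_0[symmetric]) (metis (no_types, lifting) bn divide_inverse_commute
          eq_vector_fraction_iff scaleR_scaleR)
    have "0 = g v (fst (\<beta> X1 X1))" using gv1 by simp
    also have "\<dots> = (a / b) * g (fst (\<beta> X1 X1)) w" by (simp add: vv gl gsym[of w])
    also have "\<dots> = - 2 * (a / b)" using gw1[of X1 X1] X1 by simp
    finally have "a = 0" using bn by simp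
    then have "v = 0" using vv by simp
    then show False using v_light by simp
  qed
  define c where "c = g v w"
  have vwin: "v \<notin> span {w}"
  proof
    assume "v \<in> span {w}"
    then obtain k where "v = k *\<^sub>R w" by (auto simp: span_singleton)
    then have "g v w = 0" using w_light by (simp add: gl)
    then show False using c_ne by simp
  qed
  have vnw: "v \<noteq> w" using c_ne w_light by auto
  have indvw: "independent {v, w}"
    using vwin w_light by (simp add: independent_insert)
  have claim1: "lorentzian_plane g (span {v, w})"
    unfolding lorentzian_plane_def lorentzian_on_def
  proof (intro conjI)
    show "subspace (span {v, w})" by (rule subspace_span)
    show "dim (span {v, w}) = 2" using dim_span_eq_card_independent[OF indvw] vnw by simp
    show "\<forall>x\<in>span {v, w}. \<forall>y\<in>span {v, w}. g x y = g y x" using gsym by blast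
    show "\<forall>x\<in>span {v, w}. (\<forall>y\<in>span {v, w}. g x y = 0) \<longrightarrow> x = 0"
    proof (intro ballI impI)
      fix x assume "x \<in> span {v, w}" and h: "\<forall>y\<in>span {v, w}. g x y = 0"
      then obtain a b where x: "x = a *\<^sub>R v + b *\<^sub>R w" by (auto simp: span2_iff)
      have "g x v = 0" "g x w = 0" using h by (auto intro: span_base)
      then have "b * g w v = 0" "a * g v w = 0" using v_light w_light by (simp_all add: x gl)
      then have "a = 0" "b = 0" using c_ne gsym[of w v] by auto
      then show "x = 0" by (simp add: x)
    qed
    show "\<exists>e\<in>span {v, w}. g e e < 0 \<and> (\<forall>x\<in>span {v, w}. g x e = 0 \<longrightarrow> 0 \<le> g x x)"
    proof (intro bexI conjI ballI impI)
      define e' where "e' = 1 *\<^sub>R v + (- c) *\<^sub>R w"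
      show "e' \<in> span {v, w}" unfolding e'_def span2_iff by blast
      show "g e' e' < 0" unfolding e'_def using g_quad[OF gbil gsym, of 1 v "-c" w] v_light w_light c_ne
        by (simp add: c_def) (metis c_ne not_real_square_gt_zero)
      fix x assume "x \<in> span {v, w}" and xe: "g x e' = 0"
      then obtain a b where x: "x = a *\<^sub>R v + b *\<^sub>R w" by (auto simp: span2_iff)
      have "g x e' = c * (b - a * c)" using v_light w_light gsym[of w v]
        by (simp add: x e'_def gl c_def algebra_simps)
      then have "b = a * c" using xe c_ne by (simp add: c_def)
      then have "g x x = 2 * (a * c)\<^sup>2" using g_quad[OF gbil gsym, of a v b w] v_light w_light
        by (simp add: x c_def power2_eq_square)
      then show "0 \<le> g x x" by simp
    qed
  qed
  define v' where "v' = (- 1 / g v w) *\<^sub>R v"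
  have v'w: "g v' w = -1" using c_ne by (simp add: v'_def gl)
  have wv': "g w v' = -1" using v'w gsym by metis
  have v'v': "g v' v' = 0" using v_light by (simp add: v'_def gl)
  have gv'x: "g x v' = (- 1 / c) * g v x" for x by (simp add: v'_def gl c_def gsym[of x v])
  define U where "U = gperp g (span {v', w})"
  have Uiff: "u \<in> U \<longleftrightarrow> g u v' = 0 \<and> g u w = 0" for u
  proof
    assume "u \<in> U"
    then show "g u v' = 0 \<and> g u w = 0" by (auto simp: U_def gperp_def intro: span_base)
  next
    assume h: "g u v' = 0 \<and> g u w = 0"
    show "u \<in> U" unfolding U_def gperp_def
    proof (intro CollectI ballI)
      fix x assume "x \<in> span {v', w}"
      then obtain a b where x: "x = a *\<^sub>R v' + b *\<^sub>R w" by (auto simp: span2_iff)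
      show "g u x = 0" using h by (simp add: x gl)
    qed
  qed
  have Upos: "0 \<le> g u u \<and> (g u u = 0 \<longrightarrow> u = 0)" if "u \<in> U" for u
  proof (rule timelike_perp[OF gbil gsym gnd e])
    show "g (v' + w) (v' + w) < 0" using v'w wv' v'v' w_light by (simp add: gl)
    show "g u (v' + w) = 0" using that by (simp add: Uiff gl)
  qed
  define P where "P x = x + g x w *\<^sub>R v' + g x v' *\<^sub>R w" for x
  have PU: "P x \<in> U" for x
    unfolding Uiff P_def using v'w wv' v'v' w_light by (simp add: gl)
  have gproj_eq: "gproj g U x = P x" for x
    unfolding gproj_def
  proof (rule the_equality)
    show "P x \<in> U \<and> (\<forall>u\<in>U. g (x - P x) u = 0)"
    proof (intro conjI ballI)
      show "P x \<in> U" by (rule PU)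
      fix u assume "u \<in> U"
      then have "g v' u = 0" "g w u = 0" using gsym by (auto simp: Uiff)
      then show "g (x - P x) u = 0" by (simp add: P_def gl)
    qed
  next
    fix y assume y: "y \<in> U \<and> (\<forall>u\<in>U. g (x - y) u = 0)"
    define d where "d = (x - P x) - (x - y)"
    have d_eq: "d = y - P x" unfolding d_def by simp
    have yU: "g y v' = 0" "g y w = 0" using y by (auto simp: Uiff)
    have PxU: "g (P x) v' = 0" "g (P x) w = 0" using PU[of x] by (auto simp: Uiff)
    have dU: "d \<in> U" unfolding Uiff d_eq using yU PxU by (simp add: gl)
    have "g (x - P x) d = 0"
    proof -
      have "g v' d = 0" "g w d = 0" using dU gsym by (auto simp: Uiff)
      then show ?thesis by (simp add: P_def gl)
    qed
    moreover have "g (x - y) d = 0" using y dU by blast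
    moreover have "g d d = g (x - P x) d - g (x - y) d" unfolding d_def by (rule gl(5))
    ultimately have "g d d = 0" by simp
    then have "d = 0" using Upos[OF dU] by blast
    then show "y = P x" using d_eq by simp
  qed
  have P1: "P (fst (\<beta> X Y)) = fst (\<beta> X Y) - (2 * inner X Y) *\<^sub>R v'" for X Y
    using gw1[of X Y] gv1[of X Y] by (simp add: P_def gv'x)
  have P2: "P (snd (\<beta> X Y)) = snd (\<beta> X Y) - (2 * inner X (J Y)) *\<^sub>R v'" for X Y
    using gw2[of X Y] gv2[of X Y] by (simp add: P_def gv'x)
  define \<beta>1 where "\<beta>1 = (\<lambda>X Y. (gproj g U (fst (\<beta> X Y)), gproj g U (snd (\<beta> X Y))))"
  have \<beta>1f: "\<beta>1 X Y = (fst (\<beta> X Y) - (2 * inner X Y) *\<^sub>R v', snd (\<beta> X Y) - (2 * inner X (J Y)) *\<^sub>R v')" for X Y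
    by (simp add: \<beta>1_def gproj_eq P1 P2)
  have claim2: "\<beta> X Y = \<beta>1 X Y + ((2 * inner X Y) *\<^sub>R v', (2 * inner X (J Y)) *\<^sub>R v')" for X Y
    by (simp add: \<beta>1f)
  define s where "s = dim (fst ` form_span \<beta>)"
  have claim3: "s \<le> n \<longrightarrow> dim (right_kernel \<beta>1) \<ge> 2 * n - 2 * s + 2"
  proof
    assume sn: "s \<le> n"
    define A where "A X Y = fst (\<beta>1 X Y)" for X Y
    define Bm where "Bm X Y = snd (\<beta>1 X Y)" for X Y
    have \<beta>1AB: "\<beta>1 X Y = (A X Y, Bm X Y)" for X Y by (simp add: A_def Bm_def)
    have AP: "A X Y = P (fst (\<beta> X Y))" for X Y by (simp add: A_def \<beta>1_def gproj_eq)
    have AU: "A X Y \<in> U" for X Y by (simp add: AP PU)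
    have BU: "Bm X Y \<in> U" for X Y by (simp add: Bm_def \<beta>1_def gproj_eq PU)
    have Af: "A X Y = \<alpha> X Y + \<alpha> (J X) (J Y) - (2 * inner X Y) *\<^sub>R v'" for X Y
      by (simp add: A_def \<beta>1f fst\<beta>)
    have Bf: "Bm X Y = \<alpha> X (J Y) - \<alpha> (J X) Y - (2 * inner X (J Y)) *\<^sub>R v'" for X Y
      by (simp add: Bm_def \<beta>1f snd\<beta>)
    have Asym: "A Y X = A X Y" for X Y
      using \<alpha>_sym[rule_format, of Y X] \<alpha>_sym[rule_format, of "J Y" "J X"] by (simp add: Af inner_commute)
    have Banti: "Bm Y X = - Bm X Y" for X Y
      using \<alpha>_sym[rule_format, of Y "J X"] \<alpha>_sym[rule_format, of "J Y" X] Jinner[of X Y]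
      by (simp add: Bf inner_commute[of Y] algebra_simps)
    have BJ: "Bm X Y = A X (J Y)" for X Y
      using J_sq by (simp add: Af Bf al)
    have gU: "g (a + s1 *\<^sub>R v') (b + s2 *\<^sub>R v') = g a b" if "a \<in> U" "b \<in> U" for a b s1 s2
    proof -
      have "g a v' = 0" "g v' b = 0" using that gsym by (auto simp: Uiff)
      then show ?thesis using v'v' by (simp add: gl)
    qed
    have \<beta>AB: "\<beta> X Y = (A X Y + (2 * inner X Y) *\<^sub>R v', Bm X Y + (2 * inner X (J Y)) *\<^sub>R v')" for X Y
      using claim2[of X Y] by (simp add: \<beta>1AB)
    have wf: "wform g (\<beta>1 X Y) (\<beta>1 Z T) = wform g (\<beta> X Y) (\<beta> Z T)" for X Y Z T
      by (simp add: wform_def \<beta>AB \<beta>1AB gU AU BU)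
    have flat1: "wform g (\<beta>1 X Y) (\<beta>1 Z T) - wform g (\<beta>1 X T) (\<beta>1 Z Y) = 0" for X Y Z T
      using flat unfolding flat_form_def \<beta>_def[symmetric] by (simp add: wf)
    have bil1: "bilinear \<beta>1"
      unfolding bilinear_def
    proof (intro conjI allI)
      fix X
      show "linear (\<beta>1 X)"
      proof (rule linearI)
        fix Y1 Y2 show "\<beta>1 X (Y1 + Y2) = \<beta>1 X Y1 + \<beta>1 X Y2"
          by (simp add: \<beta>1AB Af Bf al Jl inner_add_right scaleR_add_left algebra_simps)
      next
        fix r Y show "\<beta>1 X (r *\<^sub>R Y) = r *\<^sub>R \<beta>1 X Y"
          by (simp add: \<beta>1AB Af Bf al Jl scaleR_diff_right scaleR_add_right)
      qed
    next
      fix Y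
      show "linear (\<lambda>X. \<beta>1 X Y)"
      proof (rule linearI)
        fix X1 X2 show "\<beta>1 (X1 + X2) Y = \<beta>1 X1 Y + \<beta>1 X2 Y"
          by (simp add: \<beta>1AB Af Bf al Jl inner_add_left scaleR_add_left algebra_simps)
      next
        fix r X show "\<beta>1 (r *\<^sub>R X) Y = r *\<^sub>R \<beta>1 X Y"
          by (simp add: \<beta>1AB Af Bf al Jl scaleR_diff_right scaleR_add_right)
      qed
    qed
    define Fs where "Fs = fst ` Sb"
    have sFs: "s = dim Fs" by (simp add: s_def Fs_def Sb_def)
    have subSb: "subspace Sb" by (simp add: Sb_def form_span_def subspace_span)
    have subFs: "subspace Fs" unfolding Fs_def by (rule linear_subspace_image[OF linear_fst subSb])
    have linP: "linear P"
    proof (rule linearI)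
      fix x y show "P (x + y) = P x + P y" by (simp add: P_def gl scaleR_add_left algebra_simps)
    next
      fix r x show "P (r *\<^sub>R x) = r *\<^sub>R P x" by (simp add: P_def gl scaleR_add_right)
    qed
    define R where "R = P ` Fs"
    have subR: "subspace R" unfolding R_def by (rule linear_subspace_image[OF linP subFs])
    have vFs: "v \<in> Fs" using v_in by (simp add: Fs_def Sb_def \<beta>_def)
    have indv: "independent {v}" using v_light by (simp add: independent_insert)
    obtain Bs where Bs: "{v} \<subseteq> Bs" "Bs \<subseteq> Fs" "independent Bs" "Fs \<subseteq> span Bs"
      by (rule maximal_independent_subset_extend[of "{v}" Fs]) (use vFs indv in auto)
    have finBs: "finite Bs" using Bs(3) independent_bound_general by blast
    have cardBs: "card Bs = s"
    proof -
      have "card Bs \<le> dim Fs" by (rule independent_card_le_dim[OF Bs(2) Bs(3)])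
      moreover have "dim Fs \<le> card Bs" by (rule dim_le_card[OF Bs(4) finBs])
      ultimately show ?thesis using sFs by simp
    qed
    have s1: "s \<ge> 1" using cardBs finBs Bs(1) by (metis card_0_eq empty_iff insert_subset less_one not_le)
    have Pv: "P v = 0" using c_ne v_light by (simp add: P_def v'_def gl)
    have RS: "R \<subseteq> span (P ` (Bs - {v}))"
    proof
      fix y assume "y \<in> R"
      then obtain x where x: "x \<in> Fs" "y = P x" by (auto simp: R_def)
      then have "y \<in> P ` span Bs" using Bs(4) by blast
      also have "\<dots> = span (P ` Bs)" by (simp add: span_linear_image[OF linP])
      also have "\<dots> \<subseteq> span (insert 0 (P ` (Bs - {v})))" by (rule span_mono) (use Pv in blast)
      finally show "y \<in> span (P ` (Bs - {v}))" by simp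
    qed
    have dimR: "dim R \<le> s - 1"
    proof -
      have "dim R \<le> card (P ` (Bs - {v}))" by (rule dim_le_card[OF RS]) (use finBs in simp)
      also have "\<dots> \<le> card (Bs - {v})" by (rule card_image_le) (use finBs in simp)
      also have "\<dots> = s - 1" using cardBs Bs(1) finBs by simp
      finally show ?thesis .
    qed
    obtain X0 where X0: "\<forall>X. dim (range (\<beta>1 X)) \<le> dim (range (\<beta>1 X0))"
      using ex_has_greatest_nat[of "\<lambda>X. True" X1 "\<lambda>X. dim (range (\<beta>1 X))" "DIM('l \<times> 'l) + 1"]
        dim_subset_UNIV by (metis le_imp_less_Suc Suc_eq_plus1)
    have rangeR: "range (\<beta>1 X0) \<subseteq> R \<times> R"
    proof
      fix z assume "z \<in> range (\<beta>1 X0)"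
      then obtain Y where z: "z = \<beta>1 X0 Y" by blast
      have "A X0 Y \<in> R" for Y using \<beta>S[of X0 Y] by (auto simp: AP R_def Fs_def)
      then show "z \<in> R \<times> R" by (simp add: z \<beta>1AB BJ)
    qed
    have rank: "dim (range (\<beta>1 X0)) \<le> 2 * (s - 1)"
    proof -
      have "dim (range (\<beta>1 X0)) \<le> dim (R \<times> R)" by (rule dim_subset[OF rangeR])
      also have "\<dots> = dim R + dim R" by (rule dim_Times[OF subR subR])
      finally show ?thesis using dimR by simp
    qed
    define K where "K = {Y. \<beta>1 X0 Y = 0}"
    have lin0: "linear (\<beta>1 X0)" using bil1 by (simp add: bilinear_def)
    have rn: "DIM('v) \<le> dim K + dim (range (\<beta>1 X0))"
      unfolding K_def by (rule rank_nullity_ge[OF lin0])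
    have KR: "K \<subseteq> right_kernel \<beta>1"
    proof
      fix Y assume "Y \<in> K"
      then have Y0: "\<beta>1 X0 Y = 0" by (simp add: K_def)
      have reg: "\<beta>1 Z Y \<in> range (\<beta>1 X0)" for Z by (rule regular_elem[OF bil1 X0 Y0])
      have orth: "wform g (\<beta>1 Z Y) (\<beta>1 X0 T) = 0" for Z T
        using flat1[of Z Y X0 T] Y0 by (simp add: wform_def gl zero_prod_def)
      obtain T0 where T0: "\<beta>1 Y Y = \<beta>1 X0 T0" using reg[of Y] by blast
      have BYY: "Bm Y Y = 0" by (rule self_neg[OF Banti[of Y Y]])
      have "wform g (\<beta>1 Y Y) (\<beta>1 Y Y) = 0" using orth[of Y T0] T0 by simp
      then have "g (A Y Y) (A Y Y) = 0" by (simp add: wform_def \<beta>1AB BYY gl)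
      then have AYY: "A Y Y = 0" using Upos[OF AU[of Y Y]] by blast
      show "Y \<in> right_kernel \<beta>1" unfolding right_kernel_def
      proof (intro CollectI allI)
        fix Z
        have "wform g (\<beta>1 Z Y) (\<beta>1 Y Z) - wform g (\<beta>1 Z Z) (\<beta>1 Y Y) = 0" by (rule flat1)
        then have "g (A Z Y) (A Z Y) + g (Bm Z Y) (Bm Z Y) = 0"
          using Asym[of Z Y] Banti[of Z Y] by (simp add: wform_def \<beta>1AB AYY BYY gl)
        moreover have "g (A Z Y) (A Z Y) \<ge> 0" "g (Bm Z Y) (Bm Z Y) \<ge> 0" using Upos AU BU by blast+
        ultimately have "g (A Z Y) (A Z Y) = 0" "g (Bm Z Y) (Bm Z Y) = 0" by linarith+
        then have "A Z Y = 0" "Bm Z Y = 0" using Upos AU BU by blast+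
        then show "\<beta>1 Z Y = 0" by (simp add: \<beta>1AB zero_prod_def)
      qed
    qed
    have "dim K \<le> dim (right_kernel \<beta>1)" by (rule dim_subset[OF KR])
    then show "dim (right_kernel \<beta>1) \<ge> 2 * n - 2 * s + 2"
      using rn rank dimV sn s1 by arith
  qed
  have v'wm: "g v' w = - 1" by (rule v'w)
  have claim2': "\<forall>X Y. \<beta> X Y = (gproj g U (fst (\<beta> X Y)), gproj g U (snd (\<beta> X Y))) + ((2 * inner X Y) *\<^sub>R v', (2 * inner X (J Y)) *\<^sub>R v')"
    using claim2 unfolding \<beta>1_def by blast
  show ?thesis
    unfolding Let_def \<beta>_def[symmetric] v'_def[symmetric] U_def[symmetric] \<beta>1_def[symmetric] s_def[symmetric]
    using claim1 v'wm claim2' claim3 by blast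
qed

end
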